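(* Let $N, M \in \mathrm{GL}(3,\mathbb{Z})$ satisfy: (i) $NM = MN$; (ii) $1$ is an eigenvalue of $N^n M^m$ for all $(n,m) \in \mathbb{Z}^2$; (iii) $\{k \in \mathbb{Z}^3 : N^n M^m k = k \text{ for all } (n,m) \in \mathbb{Z}^2\} = \{0\}$. Let $C \in \mathrm{GL}(3,\mathbb{Z})$ commute with both $N$ and $M$, and suppose $1$ is an eigenvalue of $N^n M^m C^s$ for all $(n,m,s) \in \mathbb{Z}^3$. Then $C$ belongs to the subgroup of $\mathrm{GL}(3,\mathbb{Z})$ generated by $N$ and $M$. *)

theory Defs
  imports "HOL-Analysis.Analysis"
begin

type_synonym imat3 = "int^3^3"

text \<open>GL(3,Z): integer 3x3 matrices invertible over the integers.\<close>
definition GL3Z :: "imat3 set" where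
  "GL3Z = {A. invertible A}"

text \<open>Integer powers of a matrix (negative powers use the integer inverse).\<close>
definition mpow :: "imat3 \<Rightarrow> int \<Rightarrow> imat3" where
  "mpow A n = (if 0 \<le> n then (((**) A) ^^ nat n) (mat 1)
               else (((**) (matrix_inv A)) ^^ nat (- n)) (mat 1))"

text \<open>1 is an eigenvalue of the integer matrix A (viewed over the complex numbers).\<close>
definition eig1 :: "imat3 \<Rightarrow> bool" where
  "eig1 A \<longleftrightarrow> (\<exists>v :: complex^3. v \<noteq> 0 \<and> (\<chi> i j. of_int (A $ i $ j)) *v v = v)"

text \<open>Subgroup of GL(3,Z) generated by a set S of elements of GL(3,Z).\<close>
inductive_set gen_subgroup :: "imat3 set \<Rightarrow> imat3 set" for S where
  gen_one: "mat 1 \<in> gen_subgroup S"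
| gen_base: "x \<in> S \<Longrightarrow> x \<in> gen_subgroup S"
| gen_mult: "a \<in> gen_subgroup S \<Longrightarrow> b \<in> gen_subgroup S \<Longrightarrow> a ** b \<in> gen_subgroup S"
| gen_inv: "a \<in> gen_subgroup S \<Longrightarrow> matrix_inv a \<in> gen_subgroup S"

end

theory Submission
  imports Defs "HOL-Computational_Algebra.Fundamental_Theorem_Algebra" "HOL-Library.Product_Plus"
begin

declare transpose_matrix_vector[simp del]

definition tr3 :: "complex^3^3 \<Rightarrow> complex" where
 "tr3 A = A$1$1 + A$2$2 + A$3$3"
definition c23 :: "complex^3^3 \<Rightarrow> complex" where
 "c23 A = A$1$1*A$2$2 - A$1$2*A$2$1 + A$1$1*A$3$3 - A$1$3*A$3$1 + A$2$2*A$3$3 - A$2$3*A$3$2"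
lemma CH3: fixes A :: "complex^3^3"
  shows "A *v (A *v (A *v x)) - tr3 A *s (A *v (A *v x)) + c23 A *s (A *v x) - det A *s x = 0"
  unfolding vec_eq_iff forall_3
  by (simp add: matrix_vector_mult_def sum_3 det_3 tr3_def c23_def; algebra)

lemma cubic_root: "\<exists>z::complex. z^3 - e1*z^2 + e2*z - e3 = 0"
proof -
  have "\<exists>z. poly [:-e3, e2, -e1, 1:] z = (0::complex)"
    by (rule fundamental_theorem_of_algebra_alt) auto
  then obtain z where "poly [:-e3, e2, -e1, 1:] z = 0" by blast
  then show ?thesis by (intro exI[of _ z]) (simp add: algebra_simps power2_eq_square power3_eq_cube)
qed

lemma quad_roots: "\<exists>a b::complex. a + b = p \<and> a * b = q"
proof -
  define r where "r = csqrt (p^2 - 4*q)"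
  have r2: "r^2 = p^2 - 4*q" unfolding r_def by simp
  show ?thesis
    apply (rule exI[of _ "(p + r)/2"], rule exI[of _ "(p - r)/2"])
    using r2 by (auto simp: field_simps power2_eq_square)
qed

lemma vieta3: "\<exists>l1 l2 l3::complex. l1+l2+l3 = e1 \<and> l1*l2+l1*l3+l2*l3 = e2 \<and> l1*l2*l3 = e3"
proof -
  obtain l1 where l1: "l1^3 - e1*l1^2 + e2*l1 - e3 = 0" using cubic_root by blast
  obtain a b where ab: "a + b = e1 - l1" "a * b = e2 - l1*(e1 - l1)" using quad_roots by blast
  show ?thesis
    apply (rule exI[of _ l1], rule exI[of _ a], rule exI[of _ b])
    using l1 ab by (auto simp: algebra_simps power2_eq_square power3_eq_cube)
qed

definition csub :: "(complex^3) set \<Rightarrow> bool" where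
  "csub S \<longleftrightarrow> 0 \<in> S \<and> (\<forall>x\<in>S. \<forall>y\<in>S. x + y \<in> S) \<and> (\<forall>c. \<forall>x\<in>S. c *s x \<in> S)"
definition invar :: "complex^3^3 \<Rightarrow> (complex^3) set \<Rightarrow> bool" where
  "invar A S \<longleftrightarrow> (\<forall>x\<in>S. A *v x \<in> S)"

lemma csub_lin: "csub S \<Longrightarrow> invar A S \<Longrightarrow> x \<in> S \<Longrightarrow> A *v x - l *s x \<in> S"
proof -
  assume S: "csub S" "invar A S" "x \<in> S"
  have "A *v x \<in> S" using S unfolding csub_def invar_def by auto
  moreover have "(-l) *s x \<in> S" using S unfolding csub_def by blast
  ultimately have "A *v x + (-l) *s x \<in> S" using S unfolding csub_def by blast
  moreover have "A *v x + (-l) *s x = A *v x - l *s x" by (simp add: vec_eq_iff)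
  ultimately show ?thesis by simp
qed

lemma CH_fact: fixes A :: "complex^3^3"
  assumes "l1+l2+l3 = tr3 A" "l1*l2+l1*l3+l2*l3 = c23 A" "l1*l2*l3 = det A"
  shows "A *v (A *v (A *v x - l3 *s x) - l2 *s (A *v x - l3 *s x))
     - l1 *s (A *v (A *v x - l3 *s x) - l2 *s (A *v x - l3 *s x)) = 0"
proof -
  have "A *v (A *v (A *v x - l3 *s x) - l2 *s (A *v x - l3 *s x))
     - l1 *s (A *v (A *v x - l3 *s x) - l2 *s (A *v x - l3 *s x)) =
     A *v (A *v (A *v x)) - (l1+l2+l3) *s (A *v (A *v x)) + (l1*l2+l1*l3+l2*l3) *s (A *v x) - (l1*l2*l3) *s x"
    unfolding vec_eq_iff forall_3
    by (simp add: matrix_vector_mult_def sum_3; algebra)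
  also have "\<dots> = 0" using CH3[of A x] assms by simp
  finally show ?thesis .
qed

lemma eigvec_in:
  assumes S: "csub S" "invar A S" and x: "x \<in> S" "x \<noteq> 0"
  shows "\<exists>y\<in>S. y \<noteq> 0 \<and> (\<exists>l. A *v y = l *s y)"
proof -
  obtain l1 l2 l3 where l: "l1+l2+l3 = tr3 A" "l1*l2+l1*l3+l2*l3 = c23 A" "l1*l2*l3 = det A"
    using vieta3 by blast
  define y1 where "y1 = A *v x - l3 *s x"
  define y2 where "y2 = A *v y1 - l2 *s y1"
  have y1S: "y1 \<in> S" unfolding y1_def using csub_lin[OF S x(1)] .
  have y2S: "y2 \<in> S" unfolding y2_def using csub_lin[OF S y1S] .
  have z: "A *v y2 - l1 *s y2 = 0" unfolding y2_def y1_def using CH_fact[OF l] .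
  show ?thesis
  proof (cases "y1 = 0")
    case True then show ?thesis using x unfolding y1_def by (intro bexI[of _ x]) auto
  next
    case False
    show ?thesis
    proof (cases "y2 = 0")
      case True then show ?thesis using False y1S unfolding y2_def by (intro bexI[of _ y1]) auto
    next
      case False2: False
      then show ?thesis using z y2S by (intro bexI[of _ y2]) auto
    qed
  qed
qed

lemma mv_scale: "(A::complex^3^3) *v (c *s x) = c *s (A *v x)"
  by (simp add: vec_eq_iff matrix_vector_mult_def sum_distrib_left algebra_simps)
lemma mv_add: "(A::complex^3^3) *v (x + y) = A *v x + A *v y"
  by (simp add: vec_eq_iff matrix_vector_mult_def sum.distrib algebra_simps)
lemma mv_comm: "(A::complex^3^3) ** B = B ** A \<Longrightarrow> A *v (B *v x) = B *v (A *v x)"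
  by (simp add: matrix_vector_mul_assoc)

lemma eig_sub:
  assumes S: "csub S" and B: "invar B S" and AB: "A ** B = B ** A"
  shows "csub {z\<in>S. A *v z = l *s z} \<and> invar B {z\<in>S. A *v z = l *s z}"
  using S B unfolding csub_def invar_def
  by (auto simp: mv_add mv_scale mv_comm[OF AB] algebra_simps)

lemma common_eig:
  assumes S: "csub S" "invar A1 S" "invar A2 S" "invar A3 S" and x: "x \<in> S" "x \<noteq> 0"
    and c: "A1 ** A2 = A2 ** A1" "A1 ** A3 = A3 ** A1" "A2 ** A3 = A3 ** A2"
  shows "\<exists>y\<in>S. y \<noteq> 0 \<and> (\<exists>l. A1 *v y = l *s y) \<and> (\<exists>l. A2 *v y = l *s y) \<and> (\<exists>l. A3 *v y = l *s y)"
proof -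
  obtain y1 l1 where y1: "y1 \<in> S" "y1 \<noteq> 0" "A1 *v y1 = l1 *s y1"
    using eigvec_in[OF S(1,2) x] by blast
  define S1 where "S1 = {z\<in>S. A1 *v z = l1 *s z}"
  have S1: "csub S1" "invar A2 S1" "invar A3 S1"
    using eig_sub[OF S(1,3) c(1)] eig_sub[OF S(1,4) c(2)] unfolding S1_def by auto
  obtain y2 l2 where y2: "y2 \<in> S1" "y2 \<noteq> 0" "A2 *v y2 = l2 *s y2"
    using eigvec_in[OF S1(1,2), of y1] y1 unfolding S1_def by blast
  define S2 where "S2 = {z\<in>S1. A2 *v z = l2 *s z}"
  have S2: "csub S2" "invar A3 S2"
    using eig_sub[OF S1(1,3) c(3)] unfolding S2_def by auto
  obtain y3 l3 where y3: "y3 \<in> S2" "y3 \<noteq> 0" "A3 *v y3 = l3 *s y3"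
    using eigvec_in[OF S2(1,2), of y2] y2 unfolding S2_def by blast
  show ?thesis using y3 unfolding S2_def S1_def by blast
qed

lemma matrix_inv_props: "invertible A \<Longrightarrow> A ** matrix_inv A = mat 1 \<and> matrix_inv A ** A = mat 1"
  unfolding invertible_def matrix_inv_def by (rule someI_ex)

definition bdot :: "complex^3 \<Rightarrow> complex^3 \<Rightarrow> complex" where
  "bdot x y = x$1*y$1 + x$2*y$2 + x$3*y$3"
definition cnjv :: "complex^3 \<Rightarrow> complex^3" where
  "cnjv x = (\<chi> i. cnj (x$i))"
definition crs :: "complex^3 \<Rightarrow> complex^3 \<Rightarrow> complex^3" where
  "crs x y = vector [x$2*y$3 - x$3*y$2, x$3*y$1 - x$1*y$3, x$1*y$2 - x$2*y$1]"
definition ut :: "complex^3^3 \<Rightarrow> bool" where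
  "ut T \<longleftrightarrow> T$2$1 = 0 \<and> T$3$1 = 0 \<and> T$3$2 = 0"

lemmas bf = vec_eq_iff forall_3 matrix_vector_mult_def matrix_matrix_mult_def sum_3 bdot_def cnjv_def crs_def
   vector_3 axis_def transpose_def

lemma bdot_self_nz: "v \<noteq> 0 \<Longrightarrow> bdot v (cnjv v) \<noteq> 0"
proof
  assume v: "v \<noteq> 0" and z: "bdot v (cnjv v) = 0"
  have "bdot v (cnjv v) = complex_of_real (((Re (v$1))\<^sup>2 + (Im (v$1))\<^sup>2) + ((Re (v$2))\<^sup>2 + (Im (v$2))\<^sup>2)
      + ((Re (v$3))\<^sup>2 + (Im (v$3))\<^sup>2))"
    by (simp add: bdot_def cnjv_def complex_mult_cnj)
  with z have "((Re (v$1))\<^sup>2 + (Im (v$1))\<^sup>2) + ((Re (v$2))\<^sup>2 + (Im (v$2))\<^sup>2)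
      + ((Re (v$3))\<^sup>2 + (Im (v$3))\<^sup>2) = 0" by (simp only: of_real_eq_0_iff)
  then have "Re (v$1) = 0 \<and> Im (v$1) = 0 \<and> Re (v$2) = 0 \<and> Im (v$2) = 0 \<and> Re (v$3) = 0 \<and> Im (v$3) = 0"
    by (simp add: add_nonneg_eq_0_iff sum_power2_eq_zero_iff)
  then have "v = 0" by (simp add: vec_eq_iff forall_3 complex_eq_iff)
  with v show False by simp
qed

lemma orth_exists: "v \<noteq> 0 \<Longrightarrow> \<exists>x. x \<noteq> 0 \<and> bdot x v = 0"
proof (cases "v$1 = 0")
  case True
  then show ?thesis by (intro exI[of _ "axis 1 1"]) (auto simp: bdot_def axis_def vec_eq_iff)
next
  case False
  show ?thesis
    apply (rule exI[of _ "vector [-(v$2), v$1, 0]"])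
    using False by (auto simp: bdot_def vec_eq_iff forall_3 vector_3 algebra_simps)
qed

lemma bdot_transpose: "bdot (transpose A *v w) v = bdot w (A *v v)"
  by (simp add: bf; algebra)
lemma bdot_scale: "bdot w (l *s v) = l * bdot w v"
  by (simp add: bdot_def algebra_simps)

lemma triang:
  fixes A1 A2 A3 :: "complex^3^3"
  assumes c: "A1 ** A2 = A2 ** A1" "A1 ** A3 = A3 ** A1" "A2 ** A3 = A3 ** A2"
  shows "\<exists>P. invertible P \<and> ut (matrix_inv P ** A1 ** P) \<and> ut (matrix_inv P ** A2 ** P)
            \<and> ut (matrix_inv P ** A3 ** P)"
proof -
  have cU: "csub UNIV" "invar A1 UNIV" "invar A2 UNIV" "invar A3 UNIV"
    by (auto simp: csub_def invar_def)
  obtain v where v: "v \<noteq> 0" "\<exists>l. A1 *v v = l *s v" "\<exists>l. A2 *v v = l *s v" "\<exists>l. A3 *v v = l *s v"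
  proof -
    have "axis 1 1 \<noteq> (0::complex^3)" by (simp add: axis_def vec_eq_iff)
    then show ?thesis using common_eig[OF cU _ _ c, of "axis 1 1"] that by blast
  qed
  define S where "S = {w. bdot w v = 0}"
  have invS: "invar (transpose A) S" if "\<exists>l. A *v v = l *s v" for A
    using that unfolding invar_def S_def by (auto simp: bdot_transpose bdot_scale)
  have b1: "bdot (c *s x) v = c * bdot x v" "bdot (x + y) v = bdot x v + bdot y v" "bdot 0 v = 0" for c x y
    by (simp_all add: bdot_def algebra_simps)
  have cS: "csub S" unfolding csub_def S_def by (auto simp: b1)
  have ct: "transpose A ** transpose B = transpose B ** transpose A" if "A ** B = B ** A" for A B :: "complex^3^3"
    by (metis matrix_transpose_mul that)
  obtain x0 where x0: "x0 \<in> S" "x0 \<noteq> 0" using orth_exists[OF v(1)] unfolding S_def by auto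
  obtain w where w: "w \<in> S" "w \<noteq> 0" "\<exists>l. transpose A1 *v w = l *s w" "\<exists>l. transpose A2 *v w = l *s w"
     "\<exists>l. transpose A3 *v w = l *s w"
    using common_eig[OF cS invS[OF v(2)] invS[OF v(3)] invS[OF v(4)] x0 ct[OF c(1)] ct[OF c(2)] ct[OF c(3)]]
    by blast
  have wv: "bdot w v = 0" using w(1) unfolding S_def by simp
  define u where "u = crs w (cnjv v)"
  define z where "z = cnjv w"
  define P :: "complex^3^3" where "P = (\<chi> i j. if j = 1 then v$i else if j = 2 then u$i else z$i)"
  have detP: "det P = bdot v (cnjv v) * bdot w (cnjv w) - bdot v w * bdot (cnjv v) (cnjv w)"
    unfolding P_def u_def z_def by (simp add: det_3 bf; algebra)
  have "bdot v w = 0" using wv by (simp add: bdot_def algebra_simps)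
  then have "det P \<noteq> 0" using detP bdot_self_nz[OF v(1)] bdot_self_nz[OF w(2)] by simp
  then have invP: "invertible P" by (simp add: invertible_det_nz)
  define Q where "Q = matrix_inv P"
  have PQ: "P ** Q = mat 1" "Q ** P = mat 1" using matrix_inv_props[OF invP] unfolding Q_def by auto
  have Pe1: "P *v axis 1 1 = v" unfolding P_def by (simp add: bf)
  have Pe2: "P *v axis 2 1 = u" unfolding P_def by (simp add: bf)
  have s0: "bdot w z \<noteq> 0" unfolding z_def using bdot_self_nz[OF w(2)] .
  have wu: "bdot w u = 0" unfolding u_def by (simp add: bf; algebra)
  have tPw: "transpose P *v w = vector [0, 0, bdot w z]"
  proof -
    have "(transpose P *v w)$1 = bdot w v" unfolding P_def by (simp add: bf algebra_simps)
    moreover have "(transpose P *v w)$2 = bdot w u" unfolding P_def by (simp add: bf algebra_simps)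
    moreover have "(transpose P *v w)$3 = bdot w z" unfolding P_def by (simp add: bf algebra_simps)
    ultimately show ?thesis using wv wu by (simp add: vec_eq_iff forall_3 vector_3)
  qed
  have row3: "(Q *v y)$3 = bdot w y / bdot w z" for y
  proof -
    have "y = P *v (Q *v y)" by (simp add: matrix_vector_mul_assoc PQ)
    then have "bdot w y = bdot w (P *v (Q *v y))" by simp
    also have "\<dots> = bdot (transpose P *v w) (Q *v y)" by (simp add: bdot_transpose)
    also have "\<dots> = bdot w z * (Q *v y)$3" unfolding tPw by (simp add: bdot_def vector_3)
    finally show ?thesis using s0 by simp
  qed
  have entry: "T$i$j = (T *v axis j 1)$i" for T :: "complex^3^3" and i j
    by (simp add: matrix_vector_mult_def axis_def if_distrib cong: if_cong)
  have tri: "ut (Q ** A ** P)" if A1: "\<exists>l. A *v v = l *s v" and A2: "\<exists>l. transpose A *v w = l *s w" for A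
  proof -
    obtain l where l: "A *v v = l *s v" using A1 by blast
    obtain m where m: "transpose A *v w = m *s w" using A2 by blast
    have c1: "(Q ** A ** P) *v axis 1 1 = l *s axis 1 1"
    proof -
      have "(Q ** A ** P) *v axis 1 1 = Q *v (A *v (P *v axis 1 1))" by (simp add: matrix_vector_mul_assoc matrix_mul_assoc)
      also have "\<dots> = l *s (Q *v (P *v axis 1 1))" unfolding Pe1 l by (simp add: mv_scale)
      also have "\<dots> = l *s axis 1 1" by (simp add: matrix_vector_mul_assoc PQ)
      finally show ?thesis .
    qed
    have c2: "((Q ** A ** P) *v axis 2 1)$3 = 0"
    proof -
      have "(Q ** A ** P) *v axis 2 1 = Q *v (A *v u)" by (simp add: matrix_vector_mul_assoc matrix_mul_assoc Pe2[symmetric])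
      then have "((Q ** A ** P) *v axis 2 1)$3 = bdot w (A *v u) / bdot w z" by (simp add: row3)
      also have "bdot w (A *v u) = m * bdot w u"
      proof -
        have "bdot w (A *v u) = bdot (transpose A *v w) u" by (rule bdot_transpose[symmetric])
        also have "\<dots> = m * bdot w u" unfolding m by (simp add: bdot_def algebra_simps)
        finally show ?thesis .
      qed
      finally show ?thesis using wu by simp
    qed
    show ?thesis unfolding ut_def using c1 c2 by (simp add: entry[of "Q ** A ** P"] axis_def)
  qed
  show ?thesis using tri v w invP unfolding Q_def by blast
qed

lemma mm_diff_l: "(A::complex^3^3) ** (B - C) = A ** B - A ** C"
  by (simp add: matrix_matrix_mult_def vec_eq_iff sum_subtractf algebra_simps)
lemma mm_diff_r: "((B::complex^3^3) - C) ** A = B ** A - C ** A"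
  by (simp add: matrix_matrix_mult_def vec_eq_iff sum_subtractf algebra_simps)
lemma mat_comm: "(A::complex^3^3) ** mat c = mat c ** A"
  by (simp add: bf mat_def algebra_simps)
lemma comm_X: "(A::complex^3^3) ** B = B ** A \<Longrightarrow> A ** (B - mat c) = (B - mat c) ** A"
  by (simp add: mm_diff_l mm_diff_r mat_comm)
lemma comm_fix: "(A::complex^3^3) ** X = X ** A \<Longrightarrow> A *v (X *v z) - X *v z = X *v (A *v z - z)"
  by (simp add: mv_comm matrix_vector_mult_diff_distrib)
lemma ut_sub_mat: "ut A \<Longrightarrow> ut (A - mat c) \<and> (A - mat c)$i$i = A$i$i - c"
  by (simp add: ut_def mat_def)

lemma Xprops:
  fixes A B :: "complex^3^3"
  assumes "ut A" "ut B" "A ** B = B ** A" "\<not> (A$j$j = 1 \<and> B$j$j = 1)" "A$k$k = 1" "B$k$k = 1"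
  shows "\<exists>X. ut X \<and> X$j$j = 0 \<and> X$k$k \<noteq> 0 \<and> A ** X = X ** A \<and> B ** X = X ** B"
proof (cases "A$j$j = 1")
  case False
  show ?thesis
    apply (rule exI[of _ "A - mat (A$j$j)"])
    using assms False ut_sub_mat[OF assms(1)] comm_X[of A A] comm_X[of B A] by auto
next
  case True
  then have "B$j$j \<noteq> 1" using assms by auto
  then show ?thesis
    apply (rule_tac exI[of _ "B - mat (B$j$j)"])
    using assms ut_sub_mat[OF assms(2)] comm_X[of B B] comm_X[of A B] by auto
qed

lemma kill1: "ut X \<Longrightarrow> X$1$1 = 0 \<Longrightarrow> z$2 = 0 \<Longrightarrow> z$3 = 0 \<Longrightarrow> X *v z = 0"
  by (simp add: bf ut_def)
lemma kill2: "ut X \<Longrightarrow> ut Y \<Longrightarrow> X$1$1 = 0 \<Longrightarrow> Y$2$2 = 0 \<Longrightarrow> z$3 = 0 \<Longrightarrow> X *v (Y *v z) = 0"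
  by (simp add: bf ut_def)

lemma common_fix:
  fixes A B :: "complex^3^3"
  assumes u: "ut A" "ut B" and c: "A ** B = B ** A" and i: "A$i$i = 1" "B$i$i = 1"
  shows "\<exists>y. y \<noteq> 0 \<and> A *v y = y \<and> B *v y = y"
proof (cases "A$1$1 = 1 \<and> B$1$1 = 1")
  case True
  then show ?thesis using u
    by (intro exI[of _ "axis 1 1"]) (auto simp: bf ut_def)
next
  case F1: False
  show ?thesis
  proof (cases "A$2$2 = 1 \<and> B$2$2 = 1")
    case True
    obtain X where X: "ut X" "X$1$1 = 0" "X$2$2 \<noteq> 0" "A ** X = X ** A" "B ** X = X ** B"
      using Xprops[OF u c F1, of 2] True by auto
    define y where "y = X *v axis 2 1"
    have "y$2 \<noteq> 0" using X unfolding y_def by (simp add: bf ut_def)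
    then have "y \<noteq> 0" by auto
    moreover have "A *v y - y = 0" unfolding y_def comm_fix[OF X(4)]
      by (rule kill1[OF X(1,2)]) (use u True in \<open>simp_all add: bf ut_def\<close>)
    moreover have "B *v y - y = 0" unfolding y_def comm_fix[OF X(5)]
      by (rule kill1[OF X(1,2)]) (use u True in \<open>simp_all add: bf ut_def\<close>)
    ultimately show ?thesis by auto
  next
    case F2: False
    have i3: "i = 3" using i F1 F2 exhaust_3[of i] by auto
    obtain X where X: "ut X" "X$1$1 = 0" "X$3$3 \<noteq> 0" "A ** X = X ** A" "B ** X = X ** B"
      using Xprops[OF u c F1, of 3] i i3 by auto
    obtain Y where Y: "ut Y" "Y$2$2 = 0" "Y$3$3 \<noteq> 0" "A ** Y = Y ** A" "B ** Y = Y ** B"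
      using Xprops[OF u c F2, of 3] i i3 by auto
    define y where "y = X *v (Y *v axis 3 1)"
    have "y$3 \<noteq> 0" using X Y unfolding y_def by (simp add: bf ut_def)
    then have "y \<noteq> 0" by auto
    moreover have "A *v y - y = 0" unfolding y_def comm_fix[OF X(4)] comm_fix[OF Y(4)]
      by (rule kill2[OF X(1) Y(1) X(2) Y(2)]) (use u i i3 in \<open>simp_all add: bf ut_def\<close>)
    moreover have "B *v y - y = 0" unfolding y_def comm_fix[OF X(5)] comm_fix[OF Y(5)]
      by (rule kill2[OF X(1) Y(1) X(2) Y(2)]) (use u i i3 in \<open>simp_all add: bf ut_def\<close>)
    ultimately show ?thesis by auto
  qed
qed

lemma ut_fix:
  assumes "ut T" "T *v y = y" "y \<noteq> 0"
  shows "\<exists>i. T$i$i = 1"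
proof (rule ccontr)
  assume "\<nexists>i. T$i$i = 1"
  then have d: "T$1$1 \<noteq> 1" "T$2$2 \<noteq> 1" "T$3$3 \<noteq> 1" by auto
  have e: "T$1$1*y$1 + T$1$2*y$2 + T$1$3*y$3 = y$1" "T$2$2*y$2 + T$2$3*y$3 = y$2" "T$3$3*y$3 = y$3"
    using assms(1,2) by (simp_all add: bf ut_def)
  have "(T$3$3 - 1) * y$3 = 0" using e(3) by (simp add: algebra_simps)
  then have y3: "y$3 = 0" using d by simp
  have "(T$2$2 - 1) * y$2 = 0" using e(2) y3 by (simp add: algebra_simps)
  then have y2: "y$2 = 0" using d by simp
  have "(T$1$1 - 1) * y$1 = 0" using e(1) y3 y2 by (simp add: algebra_simps)
  then have y1: "y$1 = 0" using d by simp
  have "y = 0" using y1 y2 y3 by (simp add: vec_eq_iff forall_3)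
  with assms(3) show False by simp
qed

lemma ut_mult: "ut X \<Longrightarrow> ut Y \<Longrightarrow> ut (X ** Y) \<and> (\<forall>i. (X ** Y)$i$i = X$i$i * Y$i$i)"
  by (simp add: bf ut_def)

lemma ut_inv:
  assumes "ut X" "X ** Y = mat 1" "Y ** X = mat 1"
  shows "ut Y \<and> (\<forall>i. Y$i$i = inverse (X$i$i))"
proof -
  have e: "(Y ** X)$i$j = (if i = j then 1 else 0)" for i j using assms(3) by (simp add: mat_def)
  have f: "(X ** Y)$i$j = (if i = j then 1 else 0)" for i j using assms(2) by (simp add: mat_def)
  have a11: "Y$1$1 * X$1$1 = 1" using e[of 1 1] assms(1) by (simp add: bf ut_def)
  have a21: "Y$2$1 * X$1$1 = 0" using e[of 2 1] assms(1) by (simp add: bf ut_def)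
  have a31: "Y$3$1 * X$1$1 = 0" using e[of 3 1] assms(1) by (simp add: bf ut_def)
  have x1: "X$1$1 \<noteq> 0" using a11 by auto
  have y21: "Y$2$1 = 0" "Y$3$1 = 0" using a21 a31 x1 by auto
  have a22: "Y$2$2 * X$2$2 = 1" using e[of 2 2] assms(1) y21 by (simp add: bf ut_def)
  have a32: "Y$3$2 * X$2$2 = 0" using e[of 3 2] assms(1) y21 by (simp add: bf ut_def)
  have x2: "X$2$2 \<noteq> 0" using a22 by auto
  have y32: "Y$3$2 = 0" using a32 x2 by auto
  have a33: "Y$3$3 * X$3$3 = 1" using e[of 3 3] assms(1) y21 y32 by (simp add: bf ut_def)
  have "ut Y" using y21 y32 by (simp add: ut_def)
  moreover have "Y$i$i = inverse (X$i$i)" for i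
  proof -
    have "X$i$i * Y$i$i = 1" using a11 a22 a33 exhaust_3[of i] by (auto simp: mult.commute)
    then show ?thesis by (rule inverse_unique[symmetric])
  qed
  ultimately show ?thesis by auto
qed

lemma sep:
  assumes D: "ut D" "\<forall>i. D$i$i = 0"
    and G: "ut G1" "ut G2" "ut G3" "G1 ** D = D ** G1" "G2 ** D = D ** G2" "G3 ** D = D ** G3"
    and n: "G1$1$1 \<noteq> G1$2$2" "G2$2$2 \<noteq> G2$3$3" "G3$1$1 \<noteq> G3$3$3"
  shows "D = 0"
proof -
  have c: "(G ** D)$i$j = (D ** G)$i$j" if "G ** D = D ** G" for G i j using that by simp
  have "(G1$1$1 - G1$2$2) * D$1$2 = 0" using c[OF G(4), of 1 2] D G(1)
    by (simp add: bf ut_def algebra_simps)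
  then have d12: "D$1$2 = 0" using n by simp
  have "(G2$2$2 - G2$3$3) * D$2$3 = 0" using c[OF G(5), of 2 3] D G(2)
    by (simp add: bf ut_def algebra_simps)
  then have d23: "D$2$3 = 0" using n by simp
  have "(G3$1$1 - G3$3$3) * D$1$3 = 0" using c[OF G(6), of 1 3] D G(3) d12 d23
    by (simp add: bf ut_def algebra_simps)
  then have d13: "D$1$3 = 0" using n by simp
  show ?thesis using D d12 d23 d13 by (simp add: vec_eq_iff forall_3 ut_def)
qed


definition hom :: "('a::ab_group_add \<Rightarrow> complex) \<Rightarrow> bool" where
  "hom f \<longleftrightarrow> (\<forall>x y. f (x + y) = f x * f y) \<and> (\<forall>x. f x \<noteq> 0)"
definition subgrp :: "('a::ab_group_add) set \<Rightarrow> bool" where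
  "subgrp S \<longleftrightarrow> 0 \<in> S \<and> (\<forall>x\<in>S. \<forall>y\<in>S. x + y \<in> S)"

lemma hom0: "hom f \<Longrightarrow> f 0 = 1"
  unfolding hom_def by (metis add_0 mult_cancel_left2)

lemma two_cover:
  assumes "hom f" "hom g" "subgrp S" "\<forall>x\<in>S. f x = 1 \<or> g x = 1"
  shows "(\<forall>x\<in>S. f x = 1) \<or> (\<forall>x\<in>S. g x = 1)"
proof (rule ccontr)
  assume "\<not> ?thesis"
  then obtain x y where xy: "x \<in> S" "y \<in> S" "f x \<noteq> 1" "g y \<noteq> 1" by auto
  then have "g x = 1" "f y = 1" using assms(4) by auto
  have "x + y \<in> S" using assms(3) xy unfolding subgrp_def by auto
  moreover have "f (x + y) \<noteq> 1" "g (x + y) \<noteq> 1"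
    using assms(1,2) xy \<open>g x = 1\<close> \<open>f y = 1\<close> unfolding hom_def by auto
  ultimately show False using assms(4) by blast
qed

lemma only1:
  assumes h: "hom f1" "hom f2" "hom f3" "subgrp S" and cov: "\<forall>x\<in>S. f1 x = 1 \<or> f2 x = 1 \<or> f3 x = 1"
    and n: "\<exists>x\<in>S. f2 x \<noteq> 1" "\<exists>x\<in>S. f3 x \<noteq> 1"
  shows "\<exists>x\<in>S. f1 x = 1 \<and> f2 x \<noteq> 1 \<and> f3 x \<noteq> 1"
proof (rule ccontr)
  assume "\<not> ?thesis"
  then have "\<forall>x\<in>S. f2 x = 1 \<or> f3 x = 1" using cov by blast
  then show False using two_cover[OF h(2,3,4)] n by blast
qed

lemma core:
  assumes h: "hom f1" "hom f2" "hom f3" "subgrp H"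
    and cov: "\<forall>x. f1 x = 1 \<or> f2 x = 1 \<or> f3 x = 1"
    and n: "\<exists>x\<in>H. f1 x \<noteq> 1" "\<exists>x\<in>H. f2 x \<noteq> 1" "\<exists>x\<in>H. f3 x \<noteq> 1"
    and c: "f1 c = 1"
  shows "\<exists>h\<in>H. f1 c = f1 h \<and> f2 c = f2 h \<and> f3 c = f3 h"
proof -
  have U: "subgrp (UNIV::'a set)" by (simp add: subgrp_def)
  have covH: "\<forall>x\<in>H. f1 x = 1 \<or> f2 x = 1 \<or> f3 x = 1" using cov by blast
  obtain x2 where x2: "f2 x2 = 1" "f1 x2 \<noteq> 1" "f3 x2 \<noteq> 1"
    using only1[OF h(2,1,3) U] cov n by blast
  obtain x3 where x3: "f3 x3 = 1" "f1 x3 \<noteq> 1" "f2 x3 \<noteq> 1"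
    using only1[OF h(3,1,2) U] cov n by blast
  have hom: "f (x + y) = f x * f y" "f x \<noteq> 0" if "hom f" for f :: "'a \<Rightarrow> complex" and x y
    using that unfolding hom_def by auto
  show ?thesis
  proof (cases "f2 c = 1 \<or> f3 c = 1")
    case True
    have "f2 c = 1 \<and> f3 c = 1"
    proof (cases "f2 c = 1")
      case True
      have "f1 (x3 + c) \<noteq> 1" "f2 (x3 + c) \<noteq> 1" using x3 c True hom[OF h(1)] hom[OF h(2)] by auto
      then have "f3 (x3 + c) = 1" using cov by blast
      then have "f3 c = 1" using x3 hom[OF h(3)] by simp
      then show ?thesis using True by simp
    next
      case False
      then have f3: "f3 c = 1" using \<open>f2 c = 1 \<or> f3 c = 1\<close> by simp
      have "f1 (x2 + c) \<noteq> 1" "f3 (x2 + c) \<noteq> 1" using x2 c f3 hom[OF h(1)] hom[OF h(3)] by auto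
      then have "f2 (x2 + c) = 1" using cov by blast
      then have "f2 c = 1" using x2 hom[OF h(2)] by simp
      then show ?thesis using f3 by simp
    qed
    then show ?thesis using c hom0[OF h(1)] hom0[OF h(2)] hom0[OF h(3)] h(4)
      unfolding subgrp_def by (intro bexI[of _ 0]) auto
  next
    case False
    obtain hh where hh: "hh \<in> H" "f1 hh = 1" "f2 hh \<noteq> 1" "f3 hh \<noteq> 1"
      using only1[OF h] covH n by blast
    have a: "f3 (x2 + c) = 1"
    proof -
      have "f1 (x2 + c) \<noteq> 1" "f2 (x2 + c) \<noteq> 1" using x2 c False hom[OF h(1)] hom[OF h(2)] by auto
      then show ?thesis using cov by blast
    qed
    have b: "f3 (x2 + hh) = 1"
    proof -
      have "f1 (x2 + hh) \<noteq> 1" "f2 (x2 + hh) \<noteq> 1" using x2 hh hom[OF h(1)] hom[OF h(2)] by auto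
      then show ?thesis using cov by blast
    qed
    have a': "f2 (x3 + c) = 1"
    proof -
      have "f1 (x3 + c) \<noteq> 1" "f3 (x3 + c) \<noteq> 1" using x3 c False hom[OF h(1)] hom[OF h(3)] by auto
      then show ?thesis using cov by blast
    qed
    have b': "f2 (x3 + hh) = 1"
    proof -
      have "f1 (x3 + hh) \<noteq> 1" "f3 (x3 + hh) \<noteq> 1" using x3 hh hom[OF h(1)] hom[OF h(3)] by auto
      then show ?thesis using cov by blast
    qed
    have "f3 x2 * f3 c = f3 x2 * f3 hh" using a b hom[OF h(3)] by simp
    then have e3: "f3 c = f3 hh" using hom(2)[OF h(3)] by simp
    have "f2 x3 * f2 c = f2 x3 * f2 hh" using a' b' hom[OF h(2)] by simp
    then have e2: "f2 c = f2 hh" using hom(2)[OF h(2)] by simp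
    show ?thesis using hh e2 e3 c by auto
  qed
qed

lemma G1:
  assumes h: "hom f1" "hom f2" "hom f3" "subgrp H"
    and cov: "\<forall>x. f1 x = 1 \<or> f2 x = 1 \<or> f3 x = 1"
    and n: "\<exists>x\<in>H. f1 x \<noteq> 1" "\<exists>x\<in>H. f2 x \<noteq> 1" "\<exists>x\<in>H. f3 x \<noteq> 1"
  shows "\<exists>h\<in>H. f1 c = f1 h \<and> f2 c = f2 h \<and> f3 c = f3 h"
proof -
  have "f1 c = 1 \<or> f2 c = 1 \<or> f3 c = 1" using cov by blast
  moreover have ?thesis if "f1 c = 1" using core[OF h cov n that] .
  moreover have ?thesis if "f2 c = 1" using core[OF h(2,1,3,4) _ n(2,1,3) that] cov by blast
  moreover have ?thesis if "f3 c = 1" using core[OF h(3,1,2,4) _ n(3,1,2) that] cov by blast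
  ultimately show ?thesis by blast
qed

lemma G2:
  assumes h: "hom f1" "hom f2" "hom f3" "subgrp H"
    and cov: "\<forall>x\<in>H. f1 x = 1 \<or> f2 x = 1 \<or> f3 x = 1"
    and n: "\<exists>x\<in>H. f1 x \<noteq> 1" "\<exists>x\<in>H. f3 x \<noteq> 1"
  shows "\<exists>h\<in>H. f1 h \<noteq> f2 h"
proof (rule ccontr)
  assume "\<not> ?thesis"
  then have "\<forall>x\<in>H. f1 x = 1 \<or> f3 x = 1" using cov by auto
  then show False using two_cover[OF h(1,3,4)] n by blast
qed


definition idot :: "int^3 \<Rightarrow> int^3 \<Rightarrow> int" where
  "idot x y = x$1*y$1 + x$2*y$2 + x$3*y$3"
definition icrs :: "int^3 \<Rightarrow> int^3 \<Rightarrow> int^3" where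
  "icrs x y = vector [x$2*y$3 - x$3*y$2, x$3*y$1 - x$1*y$3, x$1*y$2 - x$2*y$1]"
definition cv :: "int^3 \<Rightarrow> complex^3" where
  "cv x = (\<chi> i. of_int (x$i))"

lemma triple_zero:
  assumes v: "v \<noteq> 0" "bdot (cv r) v = 0" "bdot (cv s) v = 0" "bdot (cv t) v = 0"
  shows "idot t (icrs r s) = 0"
proof -
  define R :: "complex^3^3" where "R = (\<chi> i. if i = 1 then cv r else if i = 2 then cv s else cv t)"
  have "R *v v = 0" using v unfolding R_def by (simp add: bf)
  then have "\<not> inj ((*v) R)" using v(1) by (metis injD matrix_vector_mult_0_right)
  then have "\<not> invertible R" using inj_matrix_vector_mult by blast
  then have "det R = 0" by (simp add: invertible_det_nz)
  then have "of_int (idot t (icrs r s)) = (0::complex)"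
    unfolding R_def by (simp add: det_3 bf cv_def idot_def icrs_def; simp add: algebra_simps)
  then show ?thesis by simp
qed

lemma int_kernel:
  assumes v: "v \<noteq> 0" and R: "\<forall>r\<in>R. bdot (cv r) v = 0"
  shows "\<exists>k. k \<noteq> 0 \<and> (\<forall>r\<in>R. idot r k = 0)"
proof (cases "\<exists>r\<in>R. \<exists>s\<in>R. icrs r s \<noteq> 0")
  case True
  then obtain r s where rs: "r \<in> R" "s \<in> R" "icrs r s \<noteq> 0" by blast
  show ?thesis
    using triple_zero[OF v(1)] R rs by (intro exI[of _ "icrs r s"]) auto
next
  case False
  show ?thesis
  proof (cases "\<forall>r\<in>R. r = 0")
    case True
    then show ?thesis by (intro exI[of _ "axis 1 1"]) (auto simp: idot_def axis_def vec_eq_iff)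
  next
    case F2: False
    then obtain r0 where r0: "r0 \<in> R" "r0 \<noteq> 0" by blast
    have "\<exists>j. icrs r0 (axis j 1) \<noteq> 0"
    proof (rule ccontr)
      assume "\<not> ?thesis"
      then have "icrs r0 (axis 1 1) = 0" "icrs r0 (axis 2 1) = 0" "icrs r0 (axis 3 1) = 0" by auto
      then have "r0 = 0" by (simp add: icrs_def bf)
      with r0 show False by simp
    qed
    then obtain j where j: "icrs r0 (axis j 1) \<noteq> 0" by blast
    have "idot t (icrs r0 (axis j 1)) = idot (icrs t r0) (axis j 1)" for t
      by (simp add: idot_def icrs_def bf; simp add: algebra_simps)
    then show ?thesis using False r0 j by (intro exI[of _ "icrs r0 (axis j 1)"]) (auto simp: idot_def)
  qed
qed


definition cm :: "imat3 \<Rightarrow> complex^3^3" where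
  "cm A = (\<chi> i j. of_int (A$i$j))"

lemma cm_mult: "cm (A ** B) = cm A ** cm B"
  by (simp add: cm_def bf)
lemma cm_one: "cm (mat 1) = mat 1"
  by (simp add: cm_def mat_def vec_eq_iff)
lemma cm_inj: "cm A = cm B \<Longrightarrow> A = B"
  by (simp add: cm_def vec_eq_iff)

lemma GL_inv: "A \<in> GL3Z \<Longrightarrow> A ** matrix_inv A = mat 1 \<and> matrix_inv A ** A = mat 1"
  unfolding GL3Z_def by (simp add: matrix_inv_props)

definition tau :: "complex^3^3 \<Rightarrow> complex^3^3 \<Rightarrow> imat3 \<Rightarrow> complex^3^3" where
  "tau P Q X = Q ** cm X ** P"

lemma tau_mult: "P ** Q = mat 1 \<Longrightarrow> tau P Q (A ** B) = tau P Q A ** tau P Q B"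
proof -
  assume PQ: "P ** Q = mat 1"
  have "Q ** cm A ** cm B ** P = Q ** cm A ** (P ** Q) ** cm B ** P" by (simp add: PQ)
  then show ?thesis unfolding tau_def cm_mult by (simp add: matrix_mul_assoc)
qed
lemma tau_one: "Q ** P = mat 1 \<Longrightarrow> tau P Q (mat 1) = mat 1"
  unfolding tau_def cm_one by simp

lemma tau_it:
  assumes PQ: "P ** Q = mat 1" "Q ** P = mat 1" and u: "ut (tau P Q B)"
  shows "ut (tau P Q (((**) B ^^ j) (mat 1))) \<and> (\<forall>i. tau P Q (((**) B ^^ j) (mat 1))$i$i = (tau P Q B$i$i)^j)"
proof (induction j)
  case 0
  then show ?case using tau_one[OF PQ(2)] by (simp add: ut_def mat_def)
next
  case (Suc j)
  then show ?case using ut_mult[OF u] by (simp add: tau_mult[OF PQ(1)])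
qed

lemma tau_mpow:
  assumes PQ: "P ** Q = mat 1" "Q ** P = mat 1" and A: "A \<in> GL3Z" and u: "ut (tau P Q A)"
  shows "ut (tau P Q (mpow A n)) \<and> (\<forall>i. tau P Q (mpow A n)$i$i = (tau P Q A$i$i) powi n)"
proof (cases "0 \<le> n")
  case True
  then show ?thesis using tau_it[OF PQ u, of "nat n"] by (simp add: mpow_def power_int_def)
next
  case False
  have inv: "tau P Q A ** tau P Q (matrix_inv A) = mat 1" "tau P Q (matrix_inv A) ** tau P Q A = mat 1"
    using GL_inv[OF A] by (simp_all add: tau_mult[OF PQ(1), symmetric] tau_one[OF PQ(2)])
  have ui: "ut (tau P Q (matrix_inv A))" "\<forall>i. tau P Q (matrix_inv A)$i$i = inverse (tau P Q A$i$i)"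
    using ut_inv[OF u inv] by auto
  show ?thesis using False tau_it[OF PQ ui(1), of "nat (-n)"] ui(2) by (simp add: mpow_def power_int_def)
qed

lemma mpow_gen: "A \<in> S \<Longrightarrow> mpow A n \<in> gen_subgroup S"
proof -
  assume A: "A \<in> S"
  have "((**) B ^^ j) (mat 1) \<in> gen_subgroup S" if "B \<in> gen_subgroup S" for B j
    using that by (induction j) (auto intro: gen_subgroup.intros)
  moreover have "A \<in> gen_subgroup S" using A by (rule gen_base)
  moreover then have "matrix_inv A \<in> gen_subgroup S" by (rule gen_inv)
  ultimately show ?thesis unfolding mpow_def by auto
qed

lemma mpow_comm:
  assumes A: "A \<in> GL3Z" and c: "A ** B = B ** A"
  shows "mpow A n ** B = B ** mpow A n"
proof -
  have it: "((**) X ^^ j) (mat 1) ** B = B ** ((**) X ^^ j) (mat 1)" if "X ** B = B ** X" for X j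
  proof (induction j)
    case 0 then show ?case by simp
  next
    case (Suc j)
    then show ?case by (simp add: matrix_mul_assoc[symmetric]) (metis that matrix_mul_assoc)
  qed
  have "matrix_inv A ** B = B ** matrix_inv A"
  proof -
    have "matrix_inv A ** B = matrix_inv A ** B ** (A ** matrix_inv A)" using GL_inv[OF A] by simp
    also have "\<dots> = matrix_inv A ** (A ** B) ** matrix_inv A" by (simp add: c matrix_mul_assoc)
    also have "\<dots> = B ** matrix_inv A" using GL_inv[OF A] by (simp add: matrix_mul_assoc)
    finally show ?thesis .
  qed
  then show ?thesis using it c unfolding mpow_def by auto
qed

lemma mpow_fix:
  assumes A: "A \<in> GL3Z" and k: "A *v k = k"
  shows "mpow A n *v k = k"
proof -
  have it: "((**) X ^^ j) (mat 1) *v k = k" if "X *v k = k" for X j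
    using that by (induction j) (auto simp: matrix_vector_mul_assoc[symmetric])
  have "matrix_inv A *v k = k"
    using GL_inv[OF A] k by (metis matrix_vector_mul_assoc matrix_vector_mul_lid)
  then show ?thesis using it k unfolding mpow_def by auto
qed


lemma diag_nz:
  assumes PQ: "P ** Q = mat 1" "Q ** P = mat 1" and A: "A \<in> GL3Z" and u: "ut (tau P Q A)"
  shows "tau P Q A$i$i \<noteq> 0"
proof -
  have inv: "tau P Q A ** tau P Q (matrix_inv A) = mat 1" "tau P Q (matrix_inv A) ** tau P Q A = mat 1"
    using GL_inv[OF A] by (simp_all add: tau_mult[OF PQ(1), symmetric] tau_one[OF PQ(2)])
  have ui: "ut (tau P Q (matrix_inv A))" using ut_inv[OF u inv] by auto
  have "(tau P Q A ** tau P Q (matrix_inv A))$i$i = 1" using inv by (simp add: mat_def)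
  then have "tau P Q A$i$i * tau P Q (matrix_inv A)$i$i = 1" using ut_mult[OF u ui] by simp
  then show ?thesis by auto
qed

definition rw :: "imat3 \<Rightarrow> 3 \<Rightarrow> int^3" where
  "rw A i = (\<chi> j. A$i$j - (if i = j then 1 else 0))"

lemma rw_fix: "(\<forall>i. idot (rw A i) k = 0) \<Longrightarrow> A *v k = k"
  by (simp add: rw_def idot_def bf) (simp add: algebra_simps)

lemma rw_cfix: "cm A *v v = v \<Longrightarrow> bdot (cv (rw A i)) v = 0"
proof -
  assume a: "cm A *v v = v"
  have "(cm A *v v)$i = v$i" using a by simp
  moreover have "bdot (cv (rw A i)) v = (cm A *v v)$i - v$i"
    using exhaust_3[of i] by (auto simp: rw_def cv_def cm_def bf algebra_simps)
  ultimately show ?thesis by simp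
qed


lemma comm_g:
  assumes G: "N \<in> GL3Z" "M \<in> GL3Z" "C \<in> GL3Z"
    and c: "X ** N = N ** X" "X ** M = M ** X" "X ** C = C ** X"
  shows "X ** (mpow N n ** mpow M m ** mpow C s) = (mpow N n ** mpow M m ** mpow C s) ** X"
proof -
  have a: "mpow N n ** X = X ** mpow N n" using mpow_comm[OF G(1)] c(1) by metis
  have b: "mpow M m ** X = X ** mpow M m" using mpow_comm[OF G(2)] c(2) by metis
  have d: "mpow C s ** X = X ** mpow C s" using mpow_comm[OF G(3)] c(3) by metis
  show ?thesis by (metis a b d matrix_mul_assoc)
qed

theorem lemma2p5:
  fixes N M C :: imat3
  assumes GN: "N \<in> GL3Z" and GM: "M \<in> GL3Z"
    and NM: "N ** M = M ** N"
    and E: "\<forall>n m. eig1 (mpow N n ** mpow M m)"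
    and K: "{k :: int^3. \<forall>n m. (mpow N n ** mpow M m) *v k = k} = {0}"
    and GC: "C \<in> GL3Z"
    and CN: "C ** N = N ** C" and CM: "C ** M = M ** C"
    and EC: "\<forall>n m s. eig1 (mpow N n ** mpow M m ** mpow C s)"
  shows "C \<in> gen_subgroup {N, M}"
proof -
  define g where "g n m s = mpow N n ** mpow M m ** mpow C s" for n m s
  have c1: "cm N ** cm M = cm M ** cm N" "cm N ** cm C = cm C ** cm N" "cm M ** cm C = cm C ** cm M"
    using NM CN CM by (simp_all add: cm_mult[symmetric])
  obtain P where P: "invertible P" "ut (matrix_inv P ** cm N ** P)" "ut (matrix_inv P ** cm M ** P)"
    "ut (matrix_inv P ** cm C ** P)" using triang[OF c1] by blast
  define Q where "Q = matrix_inv P"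
  have PQ: "P ** Q = mat 1" "Q ** P = mat 1" using matrix_inv_props[OF P(1)] unfolding Q_def by auto
  define T where "T = tau P Q"
  have Tm: "T (A ** B) = T A ** T B" for A B unfolding T_def by (rule tau_mult[OF PQ(1)])
  have u: "ut (T N)" "ut (T M)" "ut (T C)" using P unfolding T_def tau_def Q_def by auto
  have tN: "ut (T (mpow N n)) \<and> (\<forall>i. T (mpow N n)$i$i = (T N$i$i) powi n)" for n
    unfolding T_def using tau_mpow[OF PQ GN] u unfolding T_def by blast
  have tM: "ut (T (mpow M n)) \<and> (\<forall>i. T (mpow M n)$i$i = (T M$i$i) powi n)" for n
    unfolding T_def using tau_mpow[OF PQ GM] u unfolding T_def by blast
  have tC: "ut (T (mpow C n)) \<and> (\<forall>i. T (mpow C n)$i$i = (T C$i$i) powi n)" for n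
    unfolding T_def using tau_mpow[OF PQ GC] u unfolding T_def by blast
  define f where "f i p = (T N$i$i) powi (fst p) * (T M$i$i) powi (fst (snd p)) * (T C$i$i) powi (snd (snd p))"
    for i p
  have tg: "ut (T (g n m s)) \<and> (\<forall>i. T (g n m s)$i$i = f i (n, m, s))" for n m s
    using ut_mult[OF ut_mult[OF tN[THEN conjunct1] tM[THEN conjunct1], THEN conjunct1] tC[THEN conjunct1]]
      ut_mult[OF tN[THEN conjunct1] tM[THEN conjunct1]] tN tM tC
    unfolding g_def f_def by (simp add: Tm)
  have nzN: "T N$i$i \<noteq> 0" for i using diag_nz[OF PQ GN] u unfolding T_def by blast
  have nzM: "T M$i$i \<noteq> 0" for i using diag_nz[OF PQ GM] u unfolding T_def by blast
  have nzC: "T C$i$i \<noteq> 0" for i using diag_nz[OF PQ GC] u unfolding T_def by blast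
  have hom: "hom (f i)" for i
    unfolding hom_def f_def using nzN nzM nzC by (simp add: power_int_add)
  have cov: "\<forall>x. f 1 x = 1 \<or> f 2 x = 1 \<or> f 3 x = 1"
  proof
    fix x :: "int \<times> int \<times> int"
    obtain n m s where x: "x = (n, m, s)" by (cases x) auto
    obtain v where v: "v \<noteq> 0" "cm (g n m s) *v v = v" using EC unfolding eig1_def g_def cm_def by blast
    define y where "y = Q *v v"
    have Py: "P *v y = v" unfolding y_def by (simp add: matrix_vector_mul_assoc PQ)
    then have "y \<noteq> 0" using v by auto
    moreover have "T (g n m s) *v y = y"
    proof -
      have "T (g n m s) *v y = Q *v (cm (g n m s) *v (P *v y))"
        unfolding T_def tau_def by (simp add: matrix_vector_mul_assoc matrix_mul_assoc)
      also have "\<dots> = y" by (simp only: Py v(2)) (simp add: y_def)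
      finally show ?thesis .
    qed
    ultimately obtain i where "T (g n m s)$i$i = 1" using ut_fix tg by blast
    then have "f i x = 1" using tg x by simp
    then show "f 1 x = 1 \<or> f 2 x = 1 \<or> f 3 x = 1" using exhaust_3[of i] by auto
  qed
  define H :: "(int \<times> int \<times> int) set" where "H = {x. snd (snd x) = 0}"
  have sH: "subgrp H" unfolding subgrp_def H_def by simp
  have nt: "\<exists>x\<in>H. f i x \<noteq> 1" for i
  proof (rule ccontr)
    assume "\<not> ?thesis"
    then have "f i (1,0,0) = 1" "f i (0,1,0) = 1" unfolding H_def by auto
    then have a: "T N$i$i = 1" "T M$i$i = 1" unfolding f_def by auto
    have cT: "T N ** T M = T M ** T N" by (simp add: Tm[symmetric] NM)
    obtain y where y: "y \<noteq> 0" "T N *v y = y" "T M *v y = y" using common_fix[OF u(1,2) cT a] by blast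
    define v where "v = P *v y"
    have Qv: "Q *v v = y" unfolding v_def by (simp add: matrix_vector_mul_assoc PQ)
    then have v0: "v \<noteq> 0" using y by auto
    have cmfix: "cm A *v v = v" if "T A *v y = y" for A
    proof -
      have "cm A = P ** T A ** Q" unfolding T_def tau_def
        by (simp add: matrix_mul_assoc PQ) (simp add: matrix_mul_assoc[symmetric] PQ)
      then have "cm A *v v = P *v (T A *v (Q *v v))" by (simp add: matrix_vector_mul_assoc matrix_mul_assoc)
      then show ?thesis using that Qv v_def by simp
    qed
    define R where "R = range (rw N) \<union> range (rw M)"
    have "\<forall>r\<in>R. bdot (cv r) v = 0" unfolding R_def using rw_cfix cmfix y by auto
    then obtain k where k: "k \<noteq> 0" "\<forall>r\<in>R. idot r k = 0" using int_kernel[OF v0] by blast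
    have "N *v k = k" "M *v k = k" using k(2) rw_fix unfolding R_def by auto
    then have "(mpow N n ** mpow M m) *v k = k" for n m
      by (simp add: matrix_vector_mul_assoc[symmetric] mpow_fix GN GM)
    then have "k \<in> {k :: int^3. \<forall>n m. (mpow N n ** mpow M m) *v k = k}" by simp
    then show False using K k by simp
  qed
  obtain hh where hh: "hh \<in> H" "f 1 (0,0,1) = f 1 hh" "f 2 (0,0,1) = f 2 hh" "f 3 (0,0,1) = f 3 hh"
    using G1[OF hom hom hom sH cov nt nt nt] by blast
  obtain n0 m0 where hh0: "hh = (n0, m0, 0)" using hh(1) unfolding H_def by (cases hh) auto
  have covH: "\<forall>x\<in>H. f 1 x = 1 \<or> f 2 x = 1 \<or> f 3 x = 1" using cov by blast
  obtain p12 where p12: "p12 \<in> H" "f 1 p12 \<noteq> f 2 p12" using G2[OF hom hom hom sH covH nt nt] by blast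
  obtain p23 where p23: "p23 \<in> H" "f 2 p23 \<noteq> f 3 p23"
    using G2[OF hom hom hom sH _ nt nt, of 2 3 1] covH by blast
  obtain p13 where p13: "p13 \<in> H" "f 1 p13 \<noteq> f 3 p13"
    using G2[OF hom hom hom sH _ nt nt, of 1 3 2] covH by blast
  define h' where "h' = g n0 m0 0"
  define D where "D = T C - T h'"
  have gc: "X ** g n m s = g n m s ** X" if "X ** N = N ** X" "X ** M = M ** X" "X ** C = C ** X" for X n m s
    unfolding g_def using comm_g[OF GN GM GC that] .
  have gN: "g n m s ** N = N ** g n m s" for n m s using gc[of N] NM CN by metis
  have gM: "g n m s ** M = M ** g n m s" for n m s using gc[of M] NM CM by metis
  have gC: "g n m s ** C = C ** g n m s" for n m s using gc[of C] CN CM by metis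
  have gg: "g a b c ** g n m s = g n m s ** g a b c" for a b c n m s using gc[OF gN gM gC] by blast
  have Dc: "T (g a b 0) ** D = D ** T (g a b 0)" for a b
    unfolding D_def h'_def mm_diff_l mm_diff_r Tm[symmetric] using gC gg by metis
  have uh: "ut (T h')" "\<forall>i. T h'$i$i = f i hh" using tg unfolding h'_def hh0 by auto
  have Cdiag: "T C$i$i = f i (0,0,1)" for i unfolding f_def by simp
  have uD: "ut D" using u(3) uh(1) unfolding D_def ut_def by simp
  have dD: "\<forall>i. D$i$i = 0"
  proof
    fix i :: 3
    show "D$i$i = 0" using exhaust_3[of i] hh Cdiag uh(2) unfolding D_def by auto
  qed
  obtain a1 b1 where a1: "p12 = (a1, b1, 0)" using p12(1) unfolding H_def by (cases p12) auto
  obtain a2 b2 where a2: "p23 = (a2, b2, 0)" using p23(1) unfolding H_def by (cases p23) auto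
  obtain a3 b3 where a3: "p13 = (a3, b3, 0)" using p13(1) unfolding H_def by (cases p13) auto
  have "D = 0"
    apply (rule sep[OF uD dD _ _ _ Dc Dc Dc, of a1 b1 a2 b2 a3 b3])
    using tg p12 p23 p13 a1 a2 a3 by auto
  then have "T C = T h'" unfolding D_def by simp
  then have "cm C = cm h'"
  proof -
    assume e: "T C = T h'"
    have r: "cm A = P ** T A ** Q" for A unfolding T_def tau_def
      by (simp add: matrix_mul_assoc PQ) (simp add: matrix_mul_assoc[symmetric] PQ)
    show ?thesis using e r by metis
  qed
  then have "C = h'" by (rule cm_inj)
  moreover have "h' = mpow N n0 ** mpow M m0" unfolding h'_def g_def by (simp add: mpow_def)
  moreover have "mpow N n0 ** mpow M m0 \<in> gen_subgroup {N, M}"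
    by (intro gen_mult mpow_gen) auto
  ultimately show ?thesis by simp
qed

end
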